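(* As $v\to\infty$, $f'(v)\ge(1+o(1))v^2/12$; consequently, as $t\to\infty$, $f(t)\le(\sqrt{12}+o(1))\sqrt{t}$.
   Context: For $[k]=\{0,\dots,k-1\}$ and $K\ge k$, the addition table of $[k]$ as a subset of $\mathbb{Z}_K$ is the set of triples (faces) $(a,b,a+b\bmod K)$, $a,b\in[k]$, viewed as a tripartite 3-uniform hypergraph whose vertices are rows, columns and labels (three disjoint vertex classes). A set of vertices spans a face if all three vertices of the face are in the set. $f'(v)$ is the maximal number of faces that can be spanned by a set of $v$ vertices in the addition table of $[k]\subset\mathbb{Z}_K$, for any $K\ge k$ with $k$ sufficiently large compared to $v$. An $(r,s)$-configuration is a collection of $s$ faces involving at most $r$ vertices in total. $f(t)$ is the least integer $r$ such that the addition table of $[k]\subset\mathbb{Z}_K$ contains an $(r,t)$-configuration for all $K\ge k$ with $k$ sufficiently large compared to $t$. *)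

theory Defs
  imports Complex_Main
begin

text \<open>Vertices of the tripartite 3-uniform hypergraph given by the addition table
  of [k] = {0..k-1} as a subset of Z_K: rows, columns and labels are three
  disjoint vertex classes.\<close>
datatype vtx = Row nat | Col nat | Lab nat

definition table_vertices :: "nat \<Rightarrow> nat \<Rightarrow> vtx set" where
  "table_vertices k K = Row ` {..<k} \<union> Col ` {..<k} \<union> Lab ` {..<K}"

text \<open>The faces of the addition table are the triples (a, b, (a+b) mod K), a,b < k;
  a face is determined by (a,b).  Number of faces spanned by a vertex set S.\<close>
definition spanned_faces :: "nat \<Rightarrow> nat \<Rightarrow> vtx set \<Rightarrow> nat" where
  "spanned_faces k K S =
     card {(a, b). a < k \<and> b < k \<and> Row a \<in> S \<and> Col b \<in> S \<and> Lab ((a + b) mod K) \<in> S}"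

definition has_config :: "nat \<Rightarrow> nat \<Rightarrow> nat \<Rightarrow> nat \<Rightarrow> bool" where
  "has_config k K r s \<longleftrightarrow>
     (\<exists>S. S \<subseteq> table_vertices k K \<and> card S \<le> r \<and> s \<le> spanned_faces k K S)"

definition f_prime :: "nat \<Rightarrow> nat" where
  "f_prime v = (GREATEST s. \<exists>k0. \<forall>k\<ge>k0. \<forall>K\<ge>k. has_config k K v s)"

definition f_conf :: "nat \<Rightarrow> nat" where
  "f_conf t = (LEAST r. \<exists>k0. \<forall>k\<ge>k0. \<forall>K\<ge>k. has_config k K r t)"

end

theory Submission
  imports Defs
begin

lemma hex_card: "3*p^2 \<le> card {(a,b). a < 2*p \<and> b < 2*p \<and> p \<le> a+b \<and> a+b < 3*p}"
proof -
  define B where "B = (\<lambda>a::nat. if a < p then {p-a..<2*p} else {..<3*p-a})"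
  have eq: "{(a,b). a < 2*p \<and> b < 2*p \<and> p \<le> a+b \<and> a+b < 3*p} = Sigma {..<2*p} B"
    unfolding B_def by (auto split: if_splits)
  have c: "card (Sigma {..<2*p} B) = (\<Sum>a<2*p. card (B a))"
    by (rule card_SigmaI) (auto simp: B_def)
  have s1: "(\<Sum>a<p. card (B a)) = (\<Sum>a<p. p + a)"
    by (rule sum.cong) (auto simp: B_def)
  have s2: "(\<Sum>a\<in>{p..<2*p}. card (B a)) = (\<Sum>j<p. 2*p - j)"
  proof -
    have "(\<Sum>a\<in>{p..<2*p}. card (B a)) = (\<Sum>j<p. card (B (j+p)))"
      by (rule sum.reindex_bij_witness[of _ "\<lambda>j. j+p" "\<lambda>a. a-p"]) auto
    also have "\<dots> = (\<Sum>j<p. 2*p - j)"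
      by (rule sum.cong) (auto simp: B_def)
    finally show ?thesis .
  qed
  have split: "(\<Sum>a<2*p. card (B a)) = (\<Sum>a<p. card (B a)) + (\<Sum>a\<in>{p..<2*p}. card (B a))"
    by (metis lessThan_atLeast0 mult_2 le_add1 sum.atLeastLessThan_concat zero_le)
  have g: "(\<Sum>a<p. p + a) + (\<Sum>j<p. 2*p - j) = (\<Sum>j<p. 3*p)"
    by (subst sum.distrib[symmetric]) (rule sum.cong, auto)
  show ?thesis using eq c s1 s2 split g by (simp add: power2_eq_square)
qed

lemma config:
  assumes "3*p \<le> k" "k \<le> K" "6*p \<le> r" "s \<le> 3*p^2"
  shows "has_config k K r s"
proof -
  define S where "S = Row ` {..<2*p} \<union> Col ` {..<2*p} \<union> Lab ` {p..<3*p}"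
  have sub: "S \<subseteq> table_vertices k K"
    using assms unfolding S_def table_vertices_def by auto
  have "card S \<le> card (Row ` {..<2*p}) + card (Col ` {..<2*p}) + card (Lab ` {p..<3*p})"
    unfolding S_def by (meson card_Un_le add_right_mono le_trans)
  also have "\<dots> \<le> 2*p + 2*p + 2*p"
  proof -
    have "card (Row ` {..<2*p}) \<le> 2*p" using card_image_le[of "{..<2*p}" Row] by simp
    moreover have "card (Col ` {..<2*p}) \<le> 2*p" using card_image_le[of "{..<2*p}" Col] by simp
    moreover have "card (Lab ` {p..<3*p}) \<le> 2*p" using card_image_le[of "{p..<3*p}" Lab] by simp
    ultimately show ?thesis by linarith
  qed
  finally have cS: "card S \<le> r" using assms by simp
  have fin: "finite {(a, b). a < k \<and> b < k \<and> Row a \<in> S \<and> Col b \<in> S \<and> Lab ((a + b) mod K) \<in> S}"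
    by (rule finite_subset[of _ "{..<k} \<times> {..<k}"]) auto
  have "{(a,b). a < 2*p \<and> b < 2*p \<and> p \<le> a+b \<and> a+b < 3*p}
      \<subseteq> {(a, b). a < k \<and> b < k \<and> Row a \<in> S \<and> Col b \<in> S \<and> Lab ((a + b) mod K) \<in> S}"
    using assms unfolding S_def by auto
  then have "3*p^2 \<le> spanned_faces k K S"
    unfolding spanned_faces_def using hex_card card_mono[OF fin] le_trans by blast
  then show ?thesis unfolding has_config_def using sub cS assms(4) by auto
qed

lemma faces_bound:
  assumes "S \<subseteq> table_vertices k K" "card S \<le> v"
  shows "spanned_faces k K S \<le> v*v"
proof -
  have finS: "finite S" using assms(1) finite_subset unfolding table_vertices_def by blast
  have r: "card {a. Row a \<in> S} \<le> v"
  proof -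
    have "card {a. Row a \<in> S} = card (Row ` {a. Row a \<in> S})" by (simp add: card_image inj_on_def)
    also have "\<dots> \<le> card S" by (rule card_mono[OF finS]) auto
    finally show ?thesis using assms(2) by linarith
  qed
  have c: "card {a. Col a \<in> S} \<le> v"
  proof -
    have "card {a. Col a \<in> S} = card (Col ` {a. Col a \<in> S})" by (simp add: card_image inj_on_def)
    also have "\<dots> \<le> card S" by (rule card_mono[OF finS]) auto
    finally show ?thesis using assms(2) by linarith
  qed
  have f1: "finite {a. Row a \<in> S}"
    using finite_vimageI[OF finS, of Row] by (simp add: inj_on_def vimage_def)
  have f2: "finite {a. Col a \<in> S}"
    using finite_vimageI[OF finS, of Col] by (simp add: inj_on_def vimage_def)
  have "spanned_faces k K S \<le> card ({a. Row a \<in> S} \<times> {a. Col a \<in> S})"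
    unfolding spanned_faces_def by (rule card_mono) (use f1 f2 in auto)
  also have "\<dots> \<le> v*v" using r c by (simp add: card_cartesian_product mult_le_mono)
  finally show ?thesis .
qed

lemma fprime_lb: "3*(v div 6)^2 \<le> f_prime v"
proof -
  let ?p = "v div 6"
  let ?P = "\<lambda>s. \<exists>k0. \<forall>k\<ge>k0. \<forall>K\<ge>k. has_config k K v s"
  have 1: "?P (3*?p^2)"
    by (rule exI[of _ "3*?p"]) (auto intro!: config)
  have 2: "y \<le> v*v" if "?P y" for y
  proof -
    from that obtain k0 where "has_config k0 k0 v y" by blast
    then obtain S where "S \<subseteq> table_vertices k0 k0" "card S \<le> v" "y \<le> spanned_faces k0 k0 S"
      unfolding has_config_def by blast
    then show "y \<le> v*v" using faces_bound le_trans by blast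
  qed
  show ?thesis unfolding f_prime_def using Greatest_le_nat[of ?P, OF 1 2] .
qed

lemma fconf_ub: "t \<le> 3*p^2 \<Longrightarrow> f_conf t \<le> 6*p"
  unfolding f_conf_def
  by (rule Least_le) (rule exI[of _ "3*p"], auto intro!: config)

theorem proposition1:
  shows "(\<forall>\<epsilon>>0. \<forall>\<^sub>F v in sequentially.
            real (f_prime v) \<ge> (1 - \<epsilon>) * (real v)\<^sup>2 / 12)
       \<and> (\<forall>\<epsilon>>0. \<forall>\<^sub>F t in sequentially.
            real (f_conf t) \<le> (sqrt 12 + \<epsilon>) * sqrt (real t))"
proof (intro conjI allI impI)
  fix \<epsilon> :: real assume e: "\<epsilon> > 0"
  show "\<forall>\<^sub>F v in sequentially. real (f_prime v) \<ge> (1 - \<epsilon>) * (real v)\<^sup>2 / 12"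
    unfolding eventually_sequentially
  proof (intro exI[of _ "nat \<lceil>10/\<epsilon>\<rceil> + 5"] allI impI)
    fix v assume v: "nat \<lceil>10/\<epsilon>\<rceil> + 5 \<le> v"
    define p where "p = v div 6"
    have "v \<le> 6*p + 5" unfolding p_def by linarith
    then have pv: "real v - 5 \<le> 6 * real p" by linarith
    have v5: "real v \<ge> 5" using v by linarith
    have ve: "real v \<ge> 10/\<epsilon>" using v by linarith
    then have ve2: "\<epsilon> * real v \<ge> 10" using e by (simp add: field_simps)
    have "(real v - 5)^2 \<le> (6 * real p)^2"
      using pv v5 by (intro power_mono) auto
    moreover have "(1 - \<epsilon>) * (real v)^2 \<le> (real v - 5)^2"
    proof -
      have "(1 - \<epsilon>) * (real v)^2 = (real v)^2 - (\<epsilon> * real v) * real v"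
        by (simp add: power2_eq_square algebra_simps)
      also have "\<dots> \<le> (real v)^2 - 10 * real v"
        using ve2 v5 by (simp add: mult_right_mono)
      also have "\<dots> \<le> (real v - 5)^2" by (simp add: power2_eq_square algebra_simps)
      finally show ?thesis .
    qed
    moreover have "real (f_prime v) \<ge> 3 * (real p)^2"
      using fprime_lb[of v] unfolding p_def by (metis of_nat_le_iff of_nat_mult of_nat_numeral of_nat_power)
    ultimately show "real (f_prime v) \<ge> (1 - \<epsilon>) * (real v)\<^sup>2 / 12"
      by (simp add: power_mult_distrib)
  qed
next
  fix \<epsilon> :: real assume e: "\<epsilon> > 0"
  show "\<forall>\<^sub>F t in sequentially. real (f_conf t) \<le> (sqrt 12 + \<epsilon>) * sqrt (real t)"
    unfolding eventually_sequentially
  proof (intro exI[of _ "nat \<lceil>36/\<epsilon>^2\<rceil>"] allI impI)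
    fix t assume t: "nat \<lceil>36/\<epsilon>^2\<rceil> \<le> t"
    define q where "q = sqrt (real t / 3)"
    define p where "p = nat \<lceil>q\<rceil>"
    have q0: "q \<ge> 0" unfolding q_def by simp
    have pc: "real p = of_int \<lceil>q\<rceil>" unfolding p_def using q0 by simp
    have pq: "real p \<ge> q" "real p \<le> q + 1" unfolding pc by linarith+
    have "real t = 3 * q^2" unfolding q_def by simp
    also have "\<dots> \<le> 3 * (real p)^2" using pq q0 by (simp add: power_mono)
    finally have "t \<le> 3*p^2" by (metis of_nat_le_iff of_nat_mult of_nat_numeral of_nat_power)
    then have "real (f_conf t) \<le> 6 * real p" using fconf_ub by (metis of_nat_le_iff of_nat_mult of_nat_numeral)
    also have "\<dots> \<le> 6 * q + 6" using pq by linarith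
    also have "6 * q = sqrt 12 * sqrt (real t)"
    proof -
      have "6 * q = sqrt 36 * sqrt (real t / 3)" unfolding q_def by simp
      also have "\<dots> = sqrt (36 * (real t / 3))" by (simp only: real_sqrt_mult)
      also have "\<dots> = sqrt (12 * real t)" by simp
      also have "\<dots> = sqrt 12 * sqrt (real t)" by (simp add: real_sqrt_mult)
      finally show ?thesis .
    qed
    also have "6 \<le> \<epsilon> * sqrt (real t)"
    proof -
      have "real t \<ge> 36/\<epsilon>^2" using t by linarith
      then have "sqrt (real t) \<ge> sqrt (36/\<epsilon>^2)" by (rule real_sqrt_le_mono)
      moreover have "sqrt (36/\<epsilon>^2) = 6/\<epsilon>" using e by (simp add: real_sqrt_divide)
      ultimately have "sqrt (real t) \<ge> 6/\<epsilon>" by simp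
      then show ?thesis using e by (simp add: field_simps)
    qed
    finally show "real (f_conf t) \<le> (sqrt 12 + \<epsilon>) * sqrt (real t)"
      by (simp add: algebra_simps)
  qed
qed

end
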